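(* Let $r$ be a prime divisor of $n$ and let $S\subseteq\mathbb{Z}_n$. Assume there is $m\mid n$ with $\gcd(m,r)=1$ such that $\Phi_{mr}\mid m_S$ but $\Phi_m\nmid m_S$. Then $|S|\ge r$. Moreover, every coset of the subgroup of $\mathbb{Z}_n$ of order $n/r$ contains at least one point of $S$.
   Context: $\Phi_d$ denotes the $d$-th cyclotomic polynomial; $m_S(x)=\sum_{s\in S}x^s$ is the mask polynomial of $S$, where elements of $\mathbb{Z}_n$ are identified with $\{0,\dots,n-1\}$ and the polynomial is considered modulo $x^n-1$. *)

theory Defs
  imports "HOL-Analysis.Analysis" "HOL-Computational_Algebra.Polynomial"
begin

text \<open>The d-th cyclotomic polynomial, as a complex polynomial: the product of
  (x - zeta) over the primitive d-th roots of unity zeta = exp(2 pi i k/d),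
  0 <= k < d, gcd(k,d) = 1.  (It has integer coefficients; divisibility by this
  monic polynomial is the same over Z, Q and C.)\<close>
definition cyclotomic :: "nat \<Rightarrow> complex poly" where
  "cyclotomic d = (\<Prod>k \<in> {k. k < d \<and> coprime k d}. [:- cis (2 * pi * real k / real d), 1:])"

text \<open>Mask polynomial of a set S of residues, elements of Z_n identified with
  {0,...,n-1}.\<close>
definition mask_poly :: "nat set \<Rightarrow> complex poly" where
  "mask_poly S = (\<Sum>s\<in>S. monom 1 s)"

definition dvd_mod_xn :: "nat \<Rightarrow> complex poly \<Rightarrow> complex poly \<Rightarrow> bool" where
  "dvd_mod_xn n p q \<longleftrightarrow> (\<exists>h. p dvd q + h * (monom 1 n - 1))"

end

theory Submission imports Defs begin

definition ee :: "real \<Rightarrow> complex" where "ee x = cis (2 * pi * x)"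

lemma ee_add: "ee (x + y) = ee x * ee y"
  unfolding ee_def by (simp add: cis_mult distrib_left)

lemma ee_int: "ee (of_int q) = 1"
  unfolding ee_def by (simp)

lemma ee_pow: "ee x ^ n = ee (real n * x)"
  unfolding ee_def Complex.DeMoivre by (simp add: ac_simps)

lemma ee_1_iff: "ee x = 1 \<longleftrightarrow> x \<in> \<int>"
proof
  assume "ee x = 1"
  then have "exp (\<i> * complex_of_real (2 * pi * x)) = 1" unfolding ee_def cis_conv_exp .
  then obtain n :: int where "2 * pi * x = of_int (2*n) * pi" by (auto simp: exp_eq_1)
  then have "x = of_int n" by simp
  then show "x \<in> \<int>" by simp
next
  assume "x \<in> \<int>" then show "ee x = 1" by (auto elim!: Ints_cases simp: ee_int)
qed

lemma ee_div_1_iff: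
  assumes "r > 0" shows "ee (of_int t / of_nat r) = 1 \<longleftrightarrow> int r dvd t"
proof -
  have "(of_int t / of_nat r :: real) \<in> \<int> \<longleftrightarrow> int r dvd t"
  proof
    assume "of_int t / of_nat r \<in> (\<int>::real set)"
    then obtain q where "of_int t / of_nat r = (of_int q :: real)" by (auto elim!: Ints_cases)
    then have "of_int t = (of_int (q * int r) :: real)" using assms by (simp add: field_simps)
    then have "t = q * int r" by linarith
    then show "int r dvd t" by simp
  next
    assume "int r dvd t" then obtain q where "t = int r * q" by auto
    then show "of_int t / of_nat r \<in> (\<int>::real set)" using assms by simp
  qed
  then show ?thesis by (simp add: ee_1_iff)
qed

lemma geo_ee:
  assumes "r > 0"
  shows "(\<Sum>b<r. ee (real b * of_int t / real r)) = (if int r dvd t then of_nat r else 0)"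
proof -
  define w where "w = ee (of_int t / real r)"
  have eq: "ee (real b * of_int t / real r) = w ^ b" for b
    by (simp add: w_def ee_pow)
  have wr: "w ^ r = 1" using assms by (simp add: w_def ee_pow ee_int[of t, simplified])
  show ?thesis
  proof (cases "int r dvd t")
    case True
    then have "w = 1" using ee_div_1_iff[OF assms] w_def by simp
    then show ?thesis using True by (simp add: eq)
  next
    case False
    then have "w \<noteq> 1" using ee_div_1_iff[OF assms] w_def by simp
    then show ?thesis using False by (simp add: eq geometric_sum wr)
  qed
qed

lemma prod_roots_dvd:
  fixes p :: "complex poly"
  assumes "finite A" "inj_on f A" "\<forall>a\<in>A. poly p (f a) = 0"
  shows "(\<Prod>a\<in>A. [:- f a, 1:]) dvd p"
  using assms
proof (induction A arbitrary: p rule: finite_induct)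
  case empty then show ?case by simp
next
  case (insert x F)
  have "[:- f x, 1:] dvd p" using insert.prems by (simp add: poly_eq_0_iff_dvd[symmetric])
  then obtain q where q: "p = [:- f x, 1:] * q" by (elim dvdE)
  have "\<forall>a\<in>F. poly q (f a) = 0"
  proof
    fix a assume a: "a \<in> F"
    then have "f a \<noteq> f x" using insert.prems(1) insert.hyps(2) by (auto simp: inj_on_def)
    moreover have "poly p (f a) = 0" using insert.prems a by auto
    ultimately show "poly q (f a) = 0" using q by simp
  qed
  then have "(\<Prod>a\<in>F. [:- f a, 1:]) dvd q" using insert by auto
  then show ?case unfolding q prod.insert[OF insert.hyps] by (rule mult_dvd_mono[OF dvd_refl])
qed

lemma ee_nat: "ee (of_nat q) = 1"
  using ee_int[of "int q"] by simp

lemma ee_nz: "ee x \<noteq> 0"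
  unfolding ee_def by (metis cis_neq_zero)

lemma ee_inj:
  assumes "0 < m" "k < m" "l < m" "ee (real k / real m) = ee (real l / real m)"
  shows "k = l"
proof -
  have "ee (real k / real m) = ee (real l / real m) * ee (of_int (int k - int l) / real m)"
    by (simp add: ee_add[symmetric] diff_divide_distrib)
  then have "ee (of_int (int k - int l) / real m) = 1" using assms(4) ee_nz
    by (metis mult_cancel_left1)
  then have "int m dvd (int k - int l)" by (subst (asm) ee_div_1_iff[OF assms(1)])
  then obtain q where q: "int k - int l = int m * q" by (elim dvdE)
  show ?thesis
  proof (rule ccontr)
    assume "k \<noteq> l"
    then have "q \<noteq> 0" using q by auto
    then have "\<bar>q\<bar> \<ge> 1" by linarith
    then have "int m * 1 \<le> int m * \<bar>q\<bar>" by (intro mult_left_mono) auto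
    then have "\<bar>int m * q\<bar> \<ge> int m" by (simp add: abs_mult)
    then show False using q assms(2,3) by linarith
  qed
qed

lemma poly_mask: "poly (mask_poly S) z = (\<Sum>s\<in>S. z ^ s)"
  by (simp add: mask_poly_def poly_sum poly_monom)

lemma coprime_lin:
  fixes k0 r b m :: nat
  assumes "coprime k0 m" "coprime m r" "prime r" "0 < b" "b < r"
  shows "coprime (k0 * r + b * m) (m * r)"
proof -
  have "coprime (k0 * r) m" using assms by (simp add: coprime_commute)
  moreover have "gcd (k0*r + b*m) m = gcd (k0*r) m" by (metis gcd_add_mult gcd.commute add.commute)
  ultimately have c1: "coprime (k0 * r + b * m) m" by (simp add: coprime_iff_gcd_eq_1)
  have "coprime r b" using assms by (metis prime_imp_coprime nat_dvd_not_less)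
  then have "coprime b r" by (simp add: coprime_commute)
  then have "coprime (b * m) r" using assms by (simp add: coprime_commute)
  moreover have "gcd (k0*r + b*m) r = gcd (b*m) r" by (metis gcd_add_mult gcd.commute)
  ultimately have c2: "coprime (k0 * r + b * m) r" by (simp add: coprime_iff_gcd_eq_1)
  show ?thesis using c1 c2 by simp
qed


theorem lemma3p3:
  fixes n r m :: nat and S :: "nat set"
  assumes "0 < n" and "prime r" and "r dvd n"
    and "S \<subseteq> {0..<n}"
    and "m dvd n" and "coprime m r"
    and "dvd_mod_xn n (cyclotomic (m * r)) (mask_poly S)"
    and "\<not> dvd_mod_xn n (cyclotomic m) (mask_poly S)"
  shows "card S \<ge> r \<and> (\<forall>a. \<exists>s\<in>S. s mod r = a mod r)"
proof -
  have m0: "m > 0" using assms(1,5) by (metis dvd_0_left_iff gr0I less_irrefl)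
  have r1: "r > 1" using assms(2) prime_gt_1_nat by blast
  then have r0: "r > 0" by simp
  have mr: "m * r dvd n" using assms(3,5,6) by (simp add: divides_mult)
  have mr0: "m * r > 0" using m0 r0 by simp
  have finS: "finite S" using assms(4) finite_subset by blast
  have cyc: "cyclotomic d = (\<Prod>k \<in> {k. k < d \<and> coprime k d}. [:- ee (real k / real d), 1:])" for d
    unfolding cyclotomic_def ee_def by simp
  have rootA: "poly (mask_poly S) (ee (real k / real (m*r))) = 0"
    if k: "k < m * r" "coprime k (m * r)" for k
  proof -
    define z where "z = ee (real k / real (m*r))"
    obtain h where h: "cyclotomic (m*r) dvd mask_poly S + h * (monom 1 n - 1)"
      using assms(7) unfolding dvd_mod_xn_def by blast
    have "poly (cyclotomic (m*r)) z = 0"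
      unfolding cyc poly_prod z_def using k by (auto intro!: prod_zero)
    then have p0: "poly (mask_poly S + h * (monom 1 n - 1)) z = 0"
      using h by (metis dvdE mult_zero_left poly_mult)
    obtain c where c: "n = m * r * c" using mr by (elim dvdE)
    have "z ^ n = ee (real n * (real k / real (m*r)))" unfolding z_def ee_pow ..
    also have "real n * (real k / real (m*r)) = real (c * k)" using c mr0 by (simp add: field_simps)
    finally have "z ^ n = 1" using ee_nat[of "c*k"] by simp
    then show ?thesis using p0 by (simp add: poly_monom z_def)
  qed
  obtain k0 where k0: "k0 < m" "coprime k0 m" and T: "poly (mask_poly S) (ee (real k0 / real m)) \<noteq> 0"
  proof (rule ccontr)
    assume "\<not> thesis"
    with that have allz: "\<forall>k\<in>{k. k < m \<and> coprime k m}. poly (mask_poly S) (ee (real k / real m)) = 0"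
      by blast
    have "inj_on (\<lambda>k. ee (real k / real m)) {k. k < m \<and> coprime k m}"
      using ee_inj[OF m0] by (auto simp: inj_on_def)
    then have "cyclotomic m dvd mask_poly S"
      unfolding cyc using prod_roots_dvd[OF _ _ allz] by simp
    then have "dvd_mod_xn n (cyclotomic m) (mask_poly S)"
      unfolding dvd_mod_xn_def by (intro exI[of _ 0]) simp
    then show False using assms(8) by blast
  qed
  define T where "T = poly (mask_poly S) (ee (real k0 / real m))"
  define Z where "Z b = ee (real k0 / real m + real b / real r)" for b :: nat
  have Zroot: "poly (mask_poly S) (Z b) = 0" if b: "0 < b" "b < r" for b
  proof -
    define K where "K = k0 * r + b * m"
    have cK: "coprime (K mod (m*r)) (m*r)"
      using coprime_lin[OF k0(2) assms(6) assms(2) b] mr0 coprime_mod_left_iff[of "m*r" K]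
      unfolding K_def by blast
    have kl: "K mod (m*r) < m * r" using mr0 by simp
    have "real K / real (m*r) = real (K div (m*r)) + real (K mod (m*r)) / real (m*r)"
    proof -
      have "K = K div (m*r) * (m*r) + K mod (m*r)" by (rule div_mult_mod_eq[symmetric])
      then have "real K = real (K div (m*r)) * real (m*r) + real (K mod (m*r))"
        by (metis of_nat_add of_nat_mult)
      then show ?thesis using mr0 by (simp add: field_simps)
    qed
    then have "ee (real K / real (m*r)) = ee (real (K mod (m*r)) / real (m*r))"
      by (simp add: ee_add ee_nat)
    moreover have "real K / real (m*r) = real k0 / real m + real b / real r"
      unfolding K_def using m0 r0 by (simp add: field_simps)
    ultimately have "Z b = ee (real (K mod (m*r)) / real (m*r))" unfolding Z_def by simp
    then show ?thesis using rootA[OF kl cK] by simp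
  qed
  have cover: "\<exists>s\<in>S. s mod r = j" if j: "j < r" for j
  proof (rule ccontr)
    assume none: "\<not> (\<exists>s\<in>S. s mod r = j)"
    define F where "F b = ee (- (real b * real j / real r)) * poly (mask_poly S) (Z b)" for b
    obtain r' where r': "r = Suc r'" using r0 by (cases r) auto
    have "(\<Sum>b<r. F b) = F 0 + (\<Sum>b<r'. F (Suc b))"
      unfolding r' by (rule sum.lessThan_Suc_shift)
    also have "(\<Sum>b<r'. F (Suc b)) = 0"
      using Zroot r' by (intro sum.neutral) (auto simp: F_def)
    also have "F 0 = T" by (simp add: F_def Z_def T_def ee_int[of 0, simplified])
    finally have s1: "(\<Sum>b<r. F b) = T" by simp
    have "(\<Sum>b<r. F b) = (\<Sum>b<r. \<Sum>s\<in>S. ee (real s * (real k0 / real m)) * ee (real b * of_int (int s - int j) / real r))"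
    proof (intro sum.cong refl)
      fix b
      have "F b = (\<Sum>s\<in>S. ee (- (real b * real j / real r)) * Z b ^ s)"
        by (simp add: F_def poly_mask sum_distrib_left)
      also have "\<dots> = (\<Sum>s\<in>S. ee (real s * (real k0 / real m)) * ee (real b * of_int (int s - int j) / real r))"
      proof (intro sum.cong refl)
        fix s
        have "ee (- (real b * real j / real r)) * Z b ^ s = ee (- (real b * real j / real r) + real s * (real k0 / real m + real b / real r))"
          unfolding Z_def ee_pow by (simp only: ee_add[symmetric])
        also have "- (real b * real j / real r) + real s * (real k0 / real m + real b / real r)
            = real s * (real k0 / real m) + real b * of_int (int s - int j) / real r"
          using r0 by (simp add: field_simps)
        finally show "ee (- (real b * real j / real r)) * Z b ^ s = ee (real s * (real k0 / real m)) * ee (real b * of_int (int s - int j) / real r)"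
          by (simp add: ee_add)
      qed
      finally show "F b = \<dots>" .
    qed
    also have "\<dots> = (\<Sum>s\<in>S. ee (real s * (real k0 / real m)) * (\<Sum>b<r. ee (real b * of_int (int s - int j) / real r)))"
      by (subst sum.swap) (simp add: sum_distrib_left)
    also have "\<dots> = 0"
    proof (intro sum.neutral ballI)
      fix s assume s: "s \<in> S"
      have "\<not> int r dvd (int s - int j)"
      proof
        assume "int r dvd (int s - int j)"
        then have "int s mod int r = int j mod int r" by (simp add: mod_eq_dvd_iff)
        then have "s mod r = j mod r" by (simp flip: of_nat_mod)
        then show False using none s j by simp
      qed
      then show "ee (real s * (real k0 / real m)) * (\<Sum>b<r. ee (real b * of_int (int s - int j) / real r)) = 0"
        using geo_ee[OF r0, of "int s - int j"] by (simp only: mult_zero_right if_False)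
    qed
    finally show False using s1 T T_def by simp
  qed
  have all: "\<forall>a. \<exists>s\<in>S. s mod r = a mod r" using cover r0 by simp
  have "{0..<r} \<subseteq> (\<lambda>s. s mod r) ` S"
  proof
    fix j assume "j \<in> {0..<r}"
    then obtain s where "s \<in> S" "s mod r = j" using cover by auto
    then show "j \<in> (\<lambda>s. s mod r) ` S" by force
  qed
  then have "card {0..<r} \<le> card S" using surj_card_le[OF finS] by blast
  then show ?thesis using all by simp
qed

end
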